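(* Let $\mathcal{X}\subset\mathbb{R}^n$ be a $\mathcal{C}^1$ smooth submanifold of dimension $d$ and $S:\mathcal{X}\rightrightarrows\mathbb{R}^m$ a set-valued map whose graph is locally closed at $(\bar x,\bar y)\in\operatorname{Graph}(S)$. Define $H:\mathbb{R}^m\rightrightarrows\mathbb{R}^n$ by $H(y^* )=D^*S(\bar x\mid\bar y)(y^* )\cap T_{\mathcal{X}}(\bar x)$. If $H(0_m)=\{0_n\}$, equivalently $N_{\operatorname{Graph}(S)}(\bar x,\bar y)\cap(T_{\mathcal{X}}(\bar x)\times\{0_m\})=\{0_{n+m}\}$, then $S$ has the Aubin property at $\bar x$ for $\bar y$ relative to $\mathcal{X}$, and $$\operatorname{lip}_{\mathcal{X}}S(\bar x\mid\bar y)=|H|^+=\sup\Big\{\tfrac{|u|}{|v|}:(u,v)\in N_{\operatorname{Graph}(S)}(\bar x,\bar y)\cap(T_{\mathcal{X}}(\bar x)\times\mathbb{R}^m)\Big\}.$$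
   Context: For a closed set $D\subset\mathbb{R}^N$ and $\bar z\in D$, the Hadamard (regular) normal cone is $\hat N_D(\bar z)=\{v:\langle v,z-\bar z\rangle\le o(|z-\bar z|)\text{ for }z\in D\}$, and the limiting normal cone $N_D(\bar z)$ is the set of limits $v=\lim v_i$ with $v_i\in\hat N_D(z_i)$, $z_i\in D$, $z_i\to\bar z$ (for locally closed sets, computed locally). $T_{\mathcal{X}}(\bar x)$ is the tangent space of the manifold $\mathcal{X}$ at $\bar x$. The coderivative is $D^*S(\bar x\mid\bar y)(y^* )=\{x^*:(x^*,-y^* )\in N_{\operatorname{Graph}(S)}(\bar x,\bar y)\}$. The outer norm of a positively homogeneous map $H$ is $|H|^+=\sup\{|z|/|w|:(w,z)\in\operatorname{Graph}(H)\}$. $S$ has the Aubin property relative to $X$ at $\bar x\in X$ for $\bar y\in S(\bar x)$ if $\operatorname{Graph}(S)$ is locally closed at $(\bar x,\bar y)$ and there are neighborhoods $V$ of $\bar x$, $W$ of $\bar y$ and $\kappa\ge0$ with $S(x')\cap W\subset S(x)+\kappa|x'-x|\mathbb{B}$ for all $x,x'\in X\cap V$ ($\mathbb{B}$ the closed unit ball). The graphical modulus $\operatorname{lip}_X S(\bar x\mid\bar y)$ is the infimum of all such $\kappa$ (over all such $V,W$). *)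

theory Defs
  imports "HOL-Analysis.Analysis"
begin

text \<open>X is a C^1 submanifold of dimension d of the Euclidean space 'a: around every point
  of X it is the zero set of a C^1 map F into a (d'-codimensional) linear subspace W
  (a copy of R^(n-d)) whose derivative at the point is onto W.\<close>
definition C1_submanifold :: "'a::euclidean_space set \<Rightarrow> nat \<Rightarrow> bool" where
  "C1_submanifold X d \<longleftrightarrow> d \<le> DIM('a) \<and>
     (\<forall>x\<in>X. \<exists>U W (F :: 'a \<Rightarrow> 'a) (F' :: 'a \<Rightarrow> 'a \<Rightarrow>\<^sub>L 'a). open U \<and> x \<in> U \<and> subspace W \<and> dim W = DIM('a) - d \<and>
        (\<forall>z\<in>U. (F has_derivative blinfun_apply (F' z)) (at z)) \<and>
        continuous_on U F' \<and> F ` U \<subseteq> W \<and> range (blinfun_apply (F' x)) = W \<and>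
        X \<inter> U = {z\<in>U. F z = 0})"

definition tangent_space :: "'a::euclidean_space set \<Rightarrow> 'a \<Rightarrow> 'a set" where
  "tangent_space X x = {v. \<exists>\<gamma> e. e > 0 \<and> \<gamma> 0 = x \<and> (\<forall>t. \<bar>t\<bar> < e \<longrightarrow> \<gamma> t \<in> X) \<and>
        (\<gamma> has_vector_derivative v) (at 0)}"

definition regular_normal_cone :: "'a::euclidean_space set \<Rightarrow> 'a \<Rightarrow> 'a set" where
  "regular_normal_cone D z0 = {v. \<forall>\<epsilon>>0. \<exists>\<delta>>0. \<forall>z\<in>D. norm (z - z0) < \<delta> \<longrightarrow>
        inner v (z - z0) \<le> \<epsilon> * norm (z - z0)}"

definition limiting_normal_cone :: "'a::euclidean_space set \<Rightarrow> 'a \<Rightarrow> 'a set" where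
  "limiting_normal_cone D z0 = {v. \<exists>z vs. (\<forall>i. z i \<in> D \<and> vs i \<in> regular_normal_cone D (z i)) \<and>
        z \<longlonglongrightarrow> z0 \<and> vs \<longlonglongrightarrow> v}"

definition locally_closed_at :: "'a::metric_space set \<Rightarrow> 'a \<Rightarrow> bool" where
  "locally_closed_at D z0 \<longleftrightarrow> (\<exists>\<epsilon>>0. closed (D \<inter> cball z0 \<epsilon>))"

definition graph :: "('a \<Rightarrow> 'b set) \<Rightarrow> ('a \<times> 'b) set" where
  "graph S = {(x, y). y \<in> S x}"

definition coderivative ::
  "('a::euclidean_space \<Rightarrow> 'b::euclidean_space set) \<Rightarrow> 'a \<Rightarrow> 'b \<Rightarrow> 'b \<Rightarrow> 'a set" where
  "coderivative S x0 y0 ystar = {xstar. (xstar, - ystar) \<in> limiting_normal_cone (graph S) (x0, y0)}"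

definition ratio_val :: "real \<Rightarrow> real \<Rightarrow> ereal" where
  "ratio_val num den = (if den = 0 then (if num = 0 then 0 else \<infinity>) else ereal (num / den))"

definition outer_norm :: "('a::real_normed_vector \<Rightarrow> 'b::real_normed_vector set) \<Rightarrow> ereal" where
  "outer_norm H = Sup {ratio_val (norm z) (norm w) | w z. (w, z) \<in> graph H}"

definition aubin_inclusion ::
  "('a::metric_space \<Rightarrow> 'b::metric_space set) \<Rightarrow> 'a set \<Rightarrow> 'a set \<Rightarrow> 'b set \<Rightarrow> real \<Rightarrow> bool" where
  "aubin_inclusion S X V W \<kappa> \<longleftrightarrow>
     (\<forall>x\<in>X \<inter> V. \<forall>x'\<in>X \<inter> V. \<forall>y\<in>S x' \<inter> W. \<exists>y'\<in>S x. dist y y' \<le> \<kappa> * dist x' x)"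

definition aubin_rel ::
  "('a::metric_space \<Rightarrow> 'b::metric_space set) \<Rightarrow> 'a set \<Rightarrow> 'a \<Rightarrow> 'b \<Rightarrow> bool" where
  "aubin_rel S X x0 y0 \<longleftrightarrow> x0 \<in> X \<and> y0 \<in> S x0 \<and> locally_closed_at (graph S) (x0, y0) \<and>
     (\<exists>V W \<kappa>. open V \<and> x0 \<in> V \<and> open W \<and> y0 \<in> W \<and> \<kappa> \<ge> 0 \<and> aubin_inclusion S X V W \<kappa>)"

definition graphical_modulus ::
  "('a::metric_space \<Rightarrow> 'b::metric_space set) \<Rightarrow> 'a set \<Rightarrow> 'a \<Rightarrow> 'b \<Rightarrow> ereal" where
  "graphical_modulus S X x0 y0 = Inf {ereal \<kappa> | \<kappa>. \<kappa> \<ge> 0 \<and>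
     (\<exists>V W. open V \<and> x0 \<in> V \<and> open W \<and> y0 \<in> W \<and> aubin_inclusion S X V W \<kappa>)}"

end

theory Submission
  imports Defs
begin


lemma strict_diff:
  fixes f :: "'a::euclidean_space \<Rightarrow> 'b::euclidean_space"
  assumes U: "open U" "x0 \<in> U" and der: "\<forall>z\<in>U. (f has_derivative blinfun_apply (f' z)) (at z)"
    and cont: "continuous_on U f'" and eta: "\<eta> > 0"
  shows "\<exists>\<rho>>0. ball x0 \<rho> \<subseteq> U \<and> (\<forall>p\<in>ball x0 \<rho>. \<forall>q\<in>ball x0 \<rho>.
           norm (f p - f q - blinfun_apply (f' x0) (p - q)) \<le> \<eta> * norm (p - q))"
proof -
  obtain \<rho>1 where r1: "\<rho>1 > 0" "\<forall>z\<in>U. dist z x0 < \<rho>1 \<longrightarrow> dist (f' z) (f' x0) < \<eta>"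
    using cont U(2) eta unfolding continuous_on_iff by blast
  obtain \<rho>2 where r2: "\<rho>2 > 0" "ball x0 \<rho>2 \<subseteq> U"
    using U open_contains_ball by blast
  define \<rho> where "\<rho> = min \<rho>1 \<rho>2"
  have rp: "\<rho> > 0" using r1 r2 by (simp add: \<rho>_def)
  have sub: "ball x0 \<rho> \<subseteq> U" using r2 by (auto simp: \<rho>_def)
  have "norm (f p - f q - blinfun_apply (f' x0) (p - q)) \<le> \<eta> * norm (p - q)"
    if p: "p \<in> ball x0 \<rho>" and q: "q \<in> ball x0 \<rho>" for p q
  proof -
    have "norm (f p - f q - blinfun_apply (f' x0) (p - q)) \<le> norm (p - q) * \<eta>"
    proof (rule differentiable_bound_linearization[where S="ball x0 \<rho>" and f'="\<lambda>z. blinfun_apply (f' z)"])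
      show "q + t *\<^sub>R (p - q) \<in> ball x0 \<rho>" if "t \<in> {0..1}" for t
      proof -
        have "(1 - t) *\<^sub>R q + t *\<^sub>R p \<in> ball x0 \<rho>"
          using that p q by (intro convexD[OF convex_ball]) auto
        moreover have "(1 - t) *\<^sub>R q + t *\<^sub>R p = q + t *\<^sub>R (p - q)"
          by (simp add: algebra_simps)
        ultimately show ?thesis by simp
      qed
      show "(f has_derivative blinfun_apply (f' z)) (at z within ball x0 \<rho>)" if "z \<in> ball x0 \<rho>" for z
        using der sub that has_derivative_at_withinI by blast
      show "onorm (blinfun_apply (f' z) - blinfun_apply (f' x0)) \<le> \<eta>" if "z \<in> ball x0 \<rho>" for z
      proof -
        have "z \<in> U" "dist z x0 < \<rho>1" using that sub by (auto simp: \<rho>_def dist_commute)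
        then have "dist (f' z) (f' x0) < \<eta>" using r1 by blast
        then have "norm (f' z - f' x0) \<le> \<eta>" by (simp add: dist_norm)
        moreover have "blinfun_apply (f' z) - blinfun_apply (f' x0) = blinfun_apply (f' z - f' x0)"
          by (simp add: fun_diff_def blinfun.diff_left minus_blinfun.rep_eq)
        ultimately show ?thesis by (simp add: norm_blinfun.rep_eq)
      qed
      show "x0 \<in> ball x0 \<rho>" using rp by simp
    qed
    then show ?thesis by (simp add: mult.commute)
  qed
  then show ?thesis using rp sub by blast
qed



lemma sgn_approx:
  fixes \<Delta> w :: "'a::real_normed_vector"
  assumes "\<Delta> \<noteq> 0" "norm w = 1" "t \<ge> 0" "norm (t *\<^sub>R w - \<Delta>) \<le> c * norm \<Delta>"
  shows "norm (sgn \<Delta> - w) \<le> 2 * c"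
proof -
  define D where "D = norm \<Delta>"
  have Dp: "D > 0" using assms(1) by (simp add: D_def)
  have e1: "sgn \<Delta> - w = (1/D) *\<^sub>R (\<Delta> - D *\<^sub>R w)"
    using Dp by (simp add: sgn_div_norm D_def algebra_simps divide_inverse_commute)
  have "\<bar>t - D\<bar> = \<bar>norm (t *\<^sub>R w) - norm \<Delta>\<bar>" using assms(2,3) by (simp add: D_def)
  also have "\<dots> \<le> norm (t *\<^sub>R w - \<Delta>)" by (rule norm_triangle_ineq3)
  finally have tD: "\<bar>t - D\<bar> \<le> norm (t *\<^sub>R w - \<Delta>)" .
  have "norm (\<Delta> - D *\<^sub>R w) \<le> norm (\<Delta> - t *\<^sub>R w) + norm (t *\<^sub>R w - D *\<^sub>R w)"
    by (rule norm_diff_triangle_le[of _ "t *\<^sub>R w"]) simp_all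
  also have "norm (t *\<^sub>R w - D *\<^sub>R w) = \<bar>t - D\<bar>"
    using assms(2) by (simp add: scaleR_diff_left[symmetric])
  also have "norm (\<Delta> - t *\<^sub>R w) = norm (t *\<^sub>R w - \<Delta>)" by (simp add: norm_minus_commute)
  finally have "norm (\<Delta> - D *\<^sub>R w) \<le> 2 * c * D" using tD assms(4) by (simp add: D_def)
  then have "(1/D) * norm (\<Delta> - D *\<^sub>R w) \<le> (1/D) * (2 * c * D)" using Dp by (intro mult_left_mono) auto
  then show ?thesis using Dp by (simp add: e1)
qed

lemma manifold_facts:
  fixes X :: "'a::euclidean_space set"
  assumes mf: "C1_submanifold X d" and x0: "x0 \<in> X"
  shows "\<exists>A::'a\<Rightarrow>'a. linear A \<and> tangent_space X x0 = {v. A v = 0}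
    \<and> (\<forall>\<eta>>0. \<exists>\<rho>>0. \<forall>p\<in>X. \<forall>q\<in>X. dist p x0 < \<rho> \<longrightarrow> dist q x0 < \<rho> \<longrightarrow> norm (A (p - q)) \<le> \<eta> * norm (p - q))
    \<and> (\<forall>w. A w = 0 \<longrightarrow> norm w = 1 \<longrightarrow> (\<forall>\<epsilon>>0. \<exists>\<rho>>0. \<forall>x'\<in>X. dist x' x0 < \<rho> \<longrightarrow>
          (\<forall>r>0. \<exists>\<xi>\<in>X. \<xi> \<noteq> x' \<and> dist \<xi> x' < r \<and> norm (sgn (\<xi> - x') - w) \<le> \<epsilon>)))"
proof -
  obtain U W and F :: "'a \<Rightarrow> 'a" and F' :: "'a \<Rightarrow> 'a \<Rightarrow>\<^sub>L 'a" where
    U: "open U" "x0 \<in> U" and "subspace W"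
    and derF: "\<forall>z\<in>U. (F has_derivative blinfun_apply (F' z)) (at z)"
    and contF: "continuous_on U F'" and FW: "F ` U \<subseteq> W" and rng: "range (blinfun_apply (F' x0)) = W"
    and XU: "X \<inter> U = {z\<in>U. F z = 0}"
    using mf x0 unfolding C1_submanifold_def by blast
  define A where "A = blinfun_apply (F' x0)"
  have linA: "linear A" unfolding A_def by (simp add: blinfun.bounded_linear_right bounded_linear.linear)
  have F0: "F x0 = 0" using XU x0 U by blast
  have XUiff: "z \<in> X \<longleftrightarrow> F z = 0" if "z \<in> U" for z using XU that by blast
  define K where "K = {v. A v = 0}"
  have subK: "subspace K" unfolding K_def using linA by (simp add: linear_subspace_kernel)
  have chord: "\<forall>\<eta>>0. \<exists>\<rho>>0. \<forall>p\<in>X. \<forall>q\<in>X. dist p x0 < \<rho> \<longrightarrow> dist q x0 < \<rho> \<longrightarrow> norm (A (p - q)) \<le> \<eta> * norm (p - q)"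
  proof (intro allI impI)
    fix \<eta> :: real assume "\<eta> > 0"
    from strict_diff[OF U derF contF this] obtain \<rho> where \<rho>: "\<rho> > 0" "ball x0 \<rho> \<subseteq> U"
      "\<forall>p\<in>ball x0 \<rho>. \<forall>q\<in>ball x0 \<rho>. norm (F p - F q - A (p - q)) \<le> \<eta> * norm (p - q)"
      unfolding A_def by blast
    show "\<exists>\<rho>>0. \<forall>p\<in>X. \<forall>q\<in>X. dist p x0 < \<rho> \<longrightarrow> dist q x0 < \<rho> \<longrightarrow> norm (A (p - q)) \<le> \<eta> * norm (p - q)"
    proof (intro exI[of _ \<rho>] conjI ballI impI)
      fix p q assume pq: "p \<in> X" "q \<in> X" "dist p x0 < \<rho>" "dist q x0 < \<rho>"
      then have bb: "p \<in> ball x0 \<rho>" "q \<in> ball x0 \<rho>" by (auto simp: dist_commute)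
      then have "F p = 0" "F q = 0" using XUiff pq \<rho>(2) by auto
      then show "norm (A (p - q)) \<le> \<eta> * norm (p - q)" proof -
        have "norm (F p - F q - A (p - q)) \<le> \<eta> * norm (p - q)" using \<rho>(3) bb by blast
        then show ?thesis using \<open>F p = 0\<close> \<open>F q = 0\<close> by simp
      qed
    qed (use \<rho> in auto)
  qed
  have TK: "tangent_space X x0 \<subseteq> K"
  proof
    fix v assume "v \<in> tangent_space X x0"
    then obtain \<gamma> e where ge: "e > 0" "\<gamma> 0 = x0" "\<forall>t. \<bar>t\<bar> < e \<longrightarrow> \<gamma> t \<in> X"
      "(\<gamma> has_vector_derivative v) (at 0)"
      unfolding tangent_space_def by blast
    have dg: "(\<gamma> has_derivative (\<lambda>t. t *\<^sub>R v)) (at 0)"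
      using ge(4) by (simp add: has_vector_derivative_def)
    have "isCont \<gamma> 0" using dg has_derivative_continuous by blast
    then obtain e2 where e2: "e2 > 0" "\<forall>t. dist t 0 < e2 \<longrightarrow> \<gamma> t \<in> U"
    proof -
      obtain r where r: "r > 0" "ball x0 r \<subseteq> U" using U open_contains_ball by blast
      obtain e2 where "e2 > 0" "\<forall>t. dist t 0 < e2 \<longrightarrow> dist (\<gamma> t) (\<gamma> 0) < r"
        using \<open>isCont \<gamma> 0\<close> r(1) unfolding continuous_at_eps_delta by blast
      then show ?thesis using that r ge(2) by (auto simp: dist_commute subset_iff)
    qed
    have dF: "(F has_derivative A) (at (\<gamma> 0))" using derF U ge(2) by (simp add: A_def)
    have dFg: "((F \<circ> \<gamma>) has_derivative (A \<circ> (\<lambda>t. t *\<^sub>R v))) (at 0)"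
      by (rule diff_chain_at[OF dg dF])
    have "((\<lambda>t::real. 0::'a) has_derivative (\<lambda>t. 0)) (at 0)" by simp
    then have "((F \<circ> \<gamma>) has_derivative (\<lambda>t. 0)) (at 0 within UNIV)"
    proof (rule has_derivative_transform_within[where d="min e e2"])
      show "0 < min e e2" using ge e2 by simp
      show "0 \<in> UNIV" by simp
      fix t :: real assume "dist t 0 < min e e2"
      then have "\<gamma> t \<in> U" "\<gamma> t \<in> X" using e2 ge(3) by auto
      then show "0 = (F \<circ> \<gamma>) t" using XUiff by simp
    qed
    then have "(A \<circ> (\<lambda>t. t *\<^sub>R v)) = (\<lambda>t. 0)" using dFg has_derivative_unique by blast
    then have "A (1 *\<^sub>R v) = 0" by (metis comp_apply)
    then show "v \<in> K" by (simp add: K_def)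
  qed
  obtain B where B: "B \<subseteq> K" "independent B" "span B = K"
    using orthonormal_basis_subspace[OF subK] by metis
  have finB: "finite B" using B(2) independent_imp_finite by blast
  define P where "P v = (\<Sum>b\<in>B. (v \<bullet> b) *\<^sub>R b)" for v
  have linP: "linear P" unfolding P_def
    by (rule linearI) (simp_all add: inner_add_left scaleR_add_left sum.distrib scaleR_sum_right)
  have PK: "P v \<in> K" for v
  proof -
    have "P v \<in> span B" unfolding P_def by (intro span_sum span_mul span_base) 
    then show ?thesis using B by simp
  qed
  have Pinj: "v = 0" if "v \<in> K" "P v = 0" for v
  proof -
    have "P v \<bullet> v = (\<Sum>b\<in>B. (v \<bullet> b)^2)"
      unfolding P_def by (simp add: inner_sum_left inner_sum_right power2_eq_square inner_commute[of b v for b])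
    then have "(\<Sum>b\<in>B. (v \<bullet> b)^2) = 0" using that by simp
    then have "\<forall>b\<in>B. (v \<bullet> b)^2 = 0" using finB by (simp add: sum_nonneg_eq_0_iff)
    then have "\<forall>b\<in>B. orthogonal v b" by (simp add: orthogonal_def)
    moreover have "v \<in> span B" using that B by simp
    ultimately have "orthogonal v v" using orthogonal_to_span by blast
    then show ?thesis by (simp add: orthogonal_def)
  qed
  define At where "At = adjoint A"
  have linAt: "linear At" unfolding At_def using linA by (rule adjoint_linear)
  have At1: "At y = 0" if "At y \<in> K" for y
  proof -
    have "At y \<bullet> At y = y \<bullet> A (At y)" unfolding At_def using linA by (simp add: adjoint_clauses inner_commute)
    also have "\<dots> = 0" using that by (simp add: K_def)
    finally show ?thesis by simp
  qed
  have At2: "A u = 0" if "At (A u) = 0" for u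
  proof -
    have "A u \<bullet> A u = At (A u) \<bullet> u" unfolding At_def using linA by (simp add: adjoint_clauses inner_commute)
    then show ?thesis using that by simp
  qed
  define M where "M v = At (A v) + P v" for v
  have linM: "linear M" unfolding M_def
    using linA linAt linP by (intro linear_compose_add) (auto intro: linear_compose[unfolded o_def])
  have M0: "v = 0" if "M v = 0" for v
  proof -
    have "At (A v) = - P v" using that by (simp add: M_def eq_neg_iff_add_eq_0)
    also have "\<dots> \<in> K" using PK subK by (simp add: subspace_neg)
    finally have "At (A v) = 0" using At1 by blast
    then have "A v = 0" using At2 by blast
    then have "v \<in> K" "P v = 0" using that \<open>At (A v) = 0\<close> by (auto simp: K_def M_def)
    then show ?thesis using Pinj by blast
  qed
  have injM: "inj M"
  proof (rule injI)
    fix x y assume "M x = M y"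
    then have "M (x - y) = 0" using linM by (simp add: linear_diff)
    then show "x = y" using M0 by fastforce
  qed
  have MK: "M w = P w" if "w \<in> K" for w
    using that linAt by (simp add: M_def K_def linear_0)
  have blAt: "bounded_linear At" "bounded_linear P" "bounded_linear A" "bounded_linear M"
    using linAt linP linA linM by (simp_all add: linear_conv_bounded_linear)
  define \<Phi> where "\<Phi> z = At (F z) + P (z - x0)" for z
  define \<Phi>' where "\<Phi>' z = (Blinfun At o\<^sub>L F' z) + Blinfun P" for z
  have appPhi': "blinfun_apply (\<Phi>' z) = (\<lambda>v. At (F' z v) + P v)" for z
    unfolding \<Phi>'_def using blAt by (intro ext) (simp add: plus_blinfun.rep_eq bounded_linear_Blinfun_apply)
  have MPhi: "blinfun_apply (\<Phi>' x0) = M"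
    using appPhi' by (auto simp: M_def A_def)
  have dPhi: "(\<Phi> has_derivative blinfun_apply (\<Phi>' z)) (at z)" if "z \<in> U" for z
  proof -
    have "((\<lambda>z. At (F z)) has_derivative (\<lambda>v. At (F' z v))) (at z)"
      using bounded_linear.has_derivative[OF blAt(1)] derF that by blast
    moreover have "((\<lambda>z. P (z - x0)) has_derivative (\<lambda>v. P (v - 0))) (at z)"
      by (intro bounded_linear.has_derivative[OF blAt(2)] derivative_intros)
    ultimately have "(\<Phi> has_derivative (\<lambda>v. At (F' z v) + P (v - 0))) (at z)"
      unfolding \<Phi>_def by (rule has_derivative_add)
    then show ?thesis by (simp add: appPhi')
  qed
  have cPhi: "continuous_on U \<Phi>'"
    unfolding \<Phi>'_def by (intro continuous_intros contF)
  have Phi0: "\<Phi> x0 = 0" using F0 linAt linP by (simp add: \<Phi>_def linear_0)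
  obtain Minv where Minv: "linear Minv" "Minv \<circ> M = id"
    using linear_injective_left_inverse[OF linM injM] by blast
  have MinvM: "Minv (M x) = x" for x using Minv(2) by (metis comp_apply id_apply)
  have invf: "Blinfun Minv o\<^sub>L \<Phi>' x0 = id_blinfun"
  proof -
    have "blinfun_apply (Blinfun Minv) = Minv"
      using Minv(1) by (simp add: bounded_linear_Blinfun_apply linear_conv_bounded_linear)
    then show ?thesis by (intro blinfun_eqI) (simp add: MPhi MinvM)
  qed
  obtain U2 V g g' where U2: "open U2" "U2 \<subseteq> U" "x0 \<in> U2" and V: "open V" "\<Phi> x0 \<in> V"
    and hom: "homeomorphism U2 V \<Phi> g"
    and dg: "\<And>y. y \<in> V \<Longrightarrow> (g has_derivative (g' y)) (at y)"
    and g': "\<And>y. y \<in> V \<Longrightarrow> g' y = inv (blinfun_apply (\<Phi>' (g y)))"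
    and "\<And>y. y \<in> V \<Longrightarrow> bij (blinfun_apply (\<Phi>' (g y)))"
    by (rule inverse_function_theorem[OF U(1) dPhi cPhi U(2) invf]) auto
  have chart: "z \<in> X \<longleftrightarrow> \<Phi> z \<in> K" if "z \<in> U" for z
  proof
    assume "z \<in> X"
    then have "F z = 0" using XUiff that by blast
    then show "\<Phi> z \<in> K" using linAt PK by (simp add: \<Phi>_def linear_0)
  next
    assume "\<Phi> z \<in> K"
    then have "At (F z) = \<Phi> z - P (z - x0)" by (simp add: \<Phi>_def)
    also have "\<dots> \<in> K" using \<open>\<Phi> z \<in> K\<close> PK subK by (simp add: subspace_diff)
    finally have "At (F z) = 0" using At1 by blast
    moreover have "F z \<in> range A" using FW rng that unfolding A_def by blast
    moreover obtain u where "F z = A u" using calculation(2) by blast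
    ultimately have "F z = 0" using At2 by simp
    then show "z \<in> X" using XUiff that by blast
  qed
  have gPhi: "g (\<Phi> z) = z" if "z \<in> U2" for z using homeomorphism_apply1[OF hom that] .
  have Phig: "\<Phi> (g y) = y" "g y \<in> U2" if "y \<in> V" for y
    using homeomorphism_apply2[OF hom that] homeomorphism_image2[OF hom] that by auto
  have PhiU2: "\<Phi> z \<in> V" if "z \<in> U2" for z using homeomorphism_image1[OF hom] that by auto
  have contg: "continuous_on V g" using homeomorphism_cont2[OF hom] .
  have gx0: "g 0 = x0" using gPhi[OF U2(3)] Phi0 by simp
  have V0: "0 \<in> V" using V Phi0 by simp
  have KT: "K \<subseteq> tangent_space X x0"
  proof
    fix w assume wK: "w \<in> K"
    define m where "m = M w"
    have mK: "m \<in> K" using MK[OF wK] PK by (simp add: m_def)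
    obtain e where e: "e > 0" "ball 0 e \<subseteq> V" using V(1) V0 open_contains_ball by blast
    define e' where "e' = e / (norm m + 1)"
    have nm1: "norm m + 1 > 0" by (simp add: add_nonneg_pos)
    have e'p: "e' > 0" using e nm1 unfolding e'_def by simp
    have inV: "t *\<^sub>R m \<in> V" if "\<bar>t\<bar> < e'" for t
    proof -
      have "norm (t *\<^sub>R m) = \<bar>t\<bar> * norm m" by simp
      also have "\<dots> \<le> \<bar>t\<bar> * (norm m + 1)" by (simp add: mult_left_mono)
      also have "\<dots> < e' * (norm m + 1)" using that nm1 by (intro mult_strict_right_mono) auto
      also have "\<dots> = e" using nm1 by (simp add: e'_def)
      finally show ?thesis using e(2) by (auto simp: dist_norm)
    qed
    define \<gamma> where "\<gamma> t = g (t *\<^sub>R m)" for t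
    have "\<gamma> t \<in> X" if "\<bar>t\<bar> < e'" for t
    proof -
      have tV: "t *\<^sub>R m \<in> V" using inV that .
      have "\<gamma> t \<in> U" using Phig(2)[OF tV] U2(2) by (auto simp: \<gamma>_def)
      moreover have "\<Phi> (\<gamma> t) \<in> K" using Phig(1)[OF tV] mK subK by (simp add: \<gamma>_def subspace_mul)
      ultimately show ?thesis using chart by blast
    qed
    moreover have "\<gamma> 0 = x0" using gx0 by (simp add: \<gamma>_def)
    moreover have "(\<gamma> has_vector_derivative w) (at 0)"
    proof -
      have d1: "((\<lambda>t::real. t *\<^sub>R m) has_derivative (\<lambda>t. t *\<^sub>R m)) (at 0)"
        by (intro derivative_eq_intros) auto
      have d2: "(g has_derivative g' 0) (at ((\<lambda>t::real. t *\<^sub>R m) 0))" using dg[OF V0] by simp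
      have "((g \<circ> (\<lambda>t. t *\<^sub>R m)) has_derivative (g' 0 \<circ> (\<lambda>t. t *\<^sub>R m))) (at 0)"
        by (rule diff_chain_at[OF d1 d2])
      moreover have "g' 0 = inv M" using g'[OF V0] gx0 MPhi by simp
      moreover have "inv M (t *\<^sub>R m) = t *\<^sub>R w" for t
      proof -
        have "t *\<^sub>R m = M (t *\<^sub>R w)" using linM by (simp add: m_def linear_scale)
        then show ?thesis using injM by (simp add: inv_f_f)
      qed
      ultimately show ?thesis unfolding has_vector_derivative_def \<gamma>_def by (simp add: o_def)
    qed
    ultimately show "w \<in> tangent_space X x0" unfolding tangent_space_def using e'p by blast
  qed
  have MT2: "\<forall>\<epsilon>>0. \<exists>\<rho>>0. \<forall>x'\<in>X. dist x' x0 < \<rho> \<longrightarrow>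
          (\<forall>r>0. \<exists>\<xi>\<in>X. \<xi> \<noteq> x' \<and> dist \<xi> x' < r \<and> norm (sgn (\<xi> - x') - w) \<le> \<epsilon>)"
    if Aw: "A w = 0" "norm w = 1" for w
  proof (intro allI impI)
    fix \<epsilon> :: real assume ep: "\<epsilon> > 0"
    have wK: "w \<in> K" using Aw by (simp add: K_def)
    define m where "m = M w"
    have mK: "m \<in> K" using MK[OF wK] PK by (simp add: m_def)
    have m0: "m \<noteq> 0" using M0[of w] Aw(2) by (auto simp: m_def)
    obtain Bm where Bm: "Bm > 0" "\<forall>x. norm (Minv x) \<le> norm x * Bm"
      using bounded_linear.pos_bounded[of Minv] Minv(1) by (auto simp: linear_conv_bounded_linear)
    define \<eta> where "\<eta> = \<epsilon> / (2 * Bm)"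
    have etap: "\<eta> > 0" using ep Bm by (simp add: \<eta>_def)
    obtain \<rho>0 where r0: "\<rho>0 > 0" "ball x0 \<rho>0 \<subseteq> U"
      "\<forall>p\<in>ball x0 \<rho>0. \<forall>q\<in>ball x0 \<rho>0. norm (\<Phi> p - \<Phi> q - M (p - q)) \<le> \<eta> * norm (p - q)"
      using strict_diff[OF U(1,2) _ cPhi etap, of \<Phi>] dPhi MPhi by auto
    obtain \<rho>2 where r2: "\<rho>2 > 0" "ball x0 \<rho>2 \<subseteq> U2" using U2 open_contains_ball by blast
    define \<rho> where "\<rho> = min \<rho>0 \<rho>2 / 2"
    have rp: "\<rho> > 0" using r0 r2 by (simp add: \<rho>_def)
    show "\<exists>\<rho>>0. \<forall>x'\<in>X. dist x' x0 < \<rho> \<longrightarrow>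
          (\<forall>r>0. \<exists>\<xi>\<in>X. \<xi> \<noteq> x' \<and> dist \<xi> x' < r \<and> norm (sgn (\<xi> - x') - w) \<le> \<epsilon>)"
    proof (intro exI[of _ \<rho>] conjI ballI impI allI rp)
      fix x' r assume x'X: "x' \<in> X" and dx: "dist x' x0 < \<rho>" and rpos: "(r::real) > 0"
      have x'U2: "x' \<in> U2" using r2 dx by (auto simp: \<rho>_def dist_commute)
      define \<zeta> where "\<zeta> = \<Phi> x'"
      have zV: "\<zeta> \<in> V" using PhiU2[OF x'U2] by (simp add: \<zeta>_def)
      have zK: "\<zeta> \<in> K" using chart x'X x'U2 U2(2) by (auto simp: \<zeta>_def)
      have gz: "g \<zeta> = x'" using gPhi[OF x'U2] by (simp add: \<zeta>_def)
      obtain d where d: "d > 0" "\<forall>y\<in>V. dist y \<zeta> < d \<longrightarrow> dist (g y) (g \<zeta>) < min r \<rho>"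
        using contg zV rpos rp unfolding continuous_on_iff by (metis min_less_iff_conj)
      obtain d2 where d2: "d2 > 0" "ball \<zeta> d2 \<subseteq> V" using V(1) zV open_contains_ball by blast
      define \<delta> where "\<delta> = min d d2"
      have nm1: "norm m + 1 > 0" by (simp add: add_nonneg_pos)
      define t where "t = \<delta> / (2 * (norm m + 1))"
      have tp: "t > 0" using d d2 nm1 by (simp add: t_def \<delta>_def)
      define y where "y = \<zeta> + t *\<^sub>R m"
      have "dist y \<zeta> = t * norm m" using tp by (simp add: y_def dist_norm)
      also have "\<dots> \<le> t * (norm m + 1)" using tp by simp
      also have "\<dots> = \<delta> / 2" using nm1 unfolding t_def by (simp add: field_simps)
      also have "\<dots> < \<delta>" using d(1) d2(1) unfolding \<delta>_def by linarith
      finally have dy: "dist y \<zeta> < \<delta>" .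
      have yV: "y \<in> V" using dy d2 by (auto simp: \<delta>_def dist_commute)
      define \<xi> where "\<xi> = g y"
      have xiU2: "\<xi> \<in> U2" using Phig(2)[OF yV] by (simp add: \<xi>_def)
      have Phixi: "\<Phi> \<xi> = y" using Phig(1)[OF yV] by (simp add: \<xi>_def)
      have yK: "y \<in> K" using zK mK subK by (simp add: y_def subspace_add subspace_mul)
      have xiX: "\<xi> \<in> X" using chart xiU2 U2(2) Phixi yK by auto
      have dxi: "dist \<xi> x' < min r \<rho>" using d(2) yV dy gz by (auto simp: \<xi>_def \<delta>_def)
      have neq: "\<xi> \<noteq> x'"
      proof
        assume "\<xi> = x'"
        then have "y = \<zeta>" using Phixi by (simp add: \<zeta>_def)
        then have "t *\<^sub>R m = 0" by (simp add: y_def)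
        then show False using tp m0 by simp
      qed
      have b1: "\<xi> \<in> ball x0 \<rho>0" "x' \<in> ball x0 \<rho>0"
      proof -
        have "dist x0 \<xi> \<le> dist x0 x' + dist x' \<xi>" by (rule dist_triangle)
        also have "\<dots> < \<rho> + \<rho>" using dx dxi by (simp add: dist_commute)
        also have "\<dots> \<le> \<rho>0" by (simp add: \<rho>_def)
        finally show "\<xi> \<in> ball x0 \<rho>0" by simp
        have "dist x' x0 \<ge> 0" by simp
        then show "x' \<in> ball x0 \<rho>0" using dx unfolding \<rho>_def mem_ball dist_commute[of x0] by linarith
      qed
      have "norm (\<Phi> \<xi> - \<Phi> x' - M (\<xi> - x')) \<le> \<eta> * norm (\<xi> - x')" using r0(3) b1 by blast
      moreover have "\<Phi> \<xi> - \<Phi> x' - M (\<xi> - x') = M (t *\<^sub>R w - (\<xi> - x'))"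
        using linM Phixi by (simp add: y_def \<zeta>_def m_def linear_diff linear_scale)
      ultimately have n1: "norm (M (t *\<^sub>R w - (\<xi> - x'))) \<le> \<eta> * norm (\<xi> - x')" by simp
      have "norm (t *\<^sub>R w - (\<xi> - x')) = norm (Minv (M (t *\<^sub>R w - (\<xi> - x'))))" by (simp add: MinvM)
      also have "\<dots> \<le> norm (M (t *\<^sub>R w - (\<xi> - x'))) * Bm" using Bm by blast
      also have "\<dots> \<le> \<eta> * norm (\<xi> - x') * Bm" using n1 Bm by (simp add: mult_right_mono)
      also have "\<dots> = (\<epsilon>/2) * norm (\<xi> - x')" using Bm by (simp add: \<eta>_def)
      finally have "norm (t *\<^sub>R w - (\<xi> - x')) \<le> (\<epsilon>/2) * norm (\<xi> - x')" .
      then have "norm (sgn (\<xi> - x') - w) \<le> 2 * (\<epsilon>/2)"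
        using neq Aw(2) tp by (intro sgn_approx) auto
      then show "\<exists>\<xi>\<in>X. \<xi> \<noteq> x' \<and> dist \<xi> x' < r \<and> norm (sgn (\<xi> - x') - w) \<le> \<epsilon>"
        using xiX neq dxi by (intro bexI[of _ \<xi>]) auto
    qed
  qed
  have TeqK: "tangent_space X x0 = {v. A v = 0}" using TK KT by (auto simp: K_def)
  show ?thesis
  proof (rule exI[where x=A], intro conjI)
    show "\<forall>w. A w = 0 \<longrightarrow> norm w = 1 \<longrightarrow> (\<forall>\<epsilon>>0. \<exists>\<rho>>0. \<forall>x'\<in>X. dist x' x0 < \<rho> \<longrightarrow>
          (\<forall>r>0. \<exists>\<xi>\<in>X. \<xi> \<noteq> x' \<and> dist \<xi> x' < r \<and> norm (sgn (\<xi> - x') - w) \<le> \<epsilon>))"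
      using MT2 by (intro allI impI) simp
  qed (use linA TeqK chord in simp_all)
qed



lemma sqrt_concave_ub:
  fixes q0 q1 :: real
  assumes "q0 > 0" "q1 \<ge> 0"
  shows "sqrt q1 \<le> sqrt q0 + (q1 - q0) / (2 * sqrt q0)"
proof -
  define a where "a = sqrt q0"
  define c where "c = sqrt q1"
  have ap: "a > 0" using assms by (simp add: a_def)
  have q0: "q0 = a^2" "q1 = c^2" using assms by (simp_all add: a_def c_def)
  have "c^2 - a^2 - (c - a) * (2*a) = (c - a)^2" by (simp add: power2_eq_square algebra_simps)
  moreover have "0 \<le> (c - a)^2" by simp
  ultimately have "(c - a) * (2*a) \<le> c^2 - a^2" by linarith
  then have "c - a \<le> (c^2 - a^2) / (2*a)" using ap by (simp add: pos_le_divide_eq)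
  moreover have "sqrt q1 = c" "sqrt q0 = a" by (simp_all add: a_def c_def)
  ultimately show ?thesis by (simp add: q0(1,2)[symmetric])
qed

lemma norm_add_sq: "(norm (x + y))^2 = (norm x)^2 + 2 * inner x y + (norm (y::'a::real_inner))^2"
  using dot_norm[of x y] by simp

lemma dist_pair_le:
  fixes a c :: "'a::real_normed_vector" and b d :: "'b::real_normed_vector"
  shows "dist (a, b) (c, d) \<le> dist a c + dist b d"
proof -
  have "dist (a, b) (c, d) = norm (a - c, b - d)" by (simp add: dist_norm)
  also have "\<dots> \<le> norm (a - c) + norm (b - d)" by (rule norm_Pair_le)
  finally show ?thesis by (simp add: dist_norm)
qed

lemma prox_regular:
  fixes D :: "'a::euclidean_space set"
  assumes r: "r > 0" and C: "C \<ge> 0"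
    and ineq: "\<forall>z\<in>D. norm (z - z0) < r \<longrightarrow> inner w (z - z0) \<le> C * (norm (z - z0))^2"
  shows "w \<in> regular_normal_cone D z0"
  unfolding regular_normal_cone_def
proof (intro CollectI allI impI)
  fix \<epsilon> :: real assume ep: "\<epsilon> > 0"
  define \<delta> where "\<delta> = min r (\<epsilon> / (C + 1))"
  have dp: "\<delta> > 0" using r ep C by (simp add: \<delta>_def)
  show "\<exists>\<delta>>0. \<forall>z\<in>D. norm (z - z0) < \<delta> \<longrightarrow> inner w (z - z0) \<le> \<epsilon> * norm (z - z0)"
  proof (intro exI[of _ \<delta>] conjI ballI impI dp)
    fix z assume z: "z \<in> D" "norm (z - z0) < \<delta>"
    have "inner w (z - z0) \<le> C * (norm (z - z0))^2" using ineq z by (simp add: \<delta>_def)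
    also have "\<dots> = (C * norm (z - z0)) * norm (z - z0)" by (simp add: power2_eq_square)
    also have "\<dots> \<le> \<epsilon> * norm (z - z0)"
    proof (rule mult_right_mono)
      have "C * norm (z - z0) \<le> C * (\<epsilon> / (C + 1))" using z C by (intro mult_left_mono) (auto simp: \<delta>_def)
      also have "\<dots> \<le> \<epsilon>" using C ep by (simp add: field_simps)
      finally show "C * norm (z - z0) \<le> \<epsilon>" .
    qed simp
    finally show "inner w (z - z0) \<le> \<epsilon> * norm (z - z0)" .
  qed
qed

lemma regular_scale:
  assumes "w \<in> regular_normal_cone D z0" "c > 0"
  shows "c *\<^sub>R w \<in> regular_normal_cone D z0"
  unfolding regular_normal_cone_def
proof (intro CollectI allI impI)
  fix \<epsilon> :: real assume ep: "\<epsilon> > 0"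
  have "\<epsilon>/c > 0" using ep assms(2) by simp
  then obtain \<delta> where d: "\<delta> > 0" "\<forall>z\<in>D. norm (z - z0) < \<delta> \<longrightarrow> inner w (z - z0) \<le> (\<epsilon>/c) * norm (z - z0)"
    using assms(1) unfolding regular_normal_cone_def by blast
  show "\<exists>\<delta>>0. \<forall>z\<in>D. norm (z - z0) < \<delta> \<longrightarrow> inner (c *\<^sub>R w) (z - z0) \<le> \<epsilon> * norm (z - z0)"
  proof (intro exI[of _ \<delta>] conjI ballI impI d(1))
    fix z assume "z \<in> D" "norm (z - z0) < \<delta>"
    then have "inner w (z - z0) \<le> (\<epsilon>/c) * norm (z - z0)" using d by blast
    then have "c * inner w (z - z0) \<le> c * ((\<epsilon>/c) * norm (z - z0))" using assms(2) by (intro mult_left_mono) auto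
    then show "inner (c *\<^sub>R w) (z - z0) \<le> \<epsilon> * norm (z - z0)" using assms(2) by simp
  qed
qed



lemma core:
  fixes S :: "'n::euclidean_space \<Rightarrow> 'm::euclidean_space set"
  assumes dom: "\<forall>x. x \<notin> X \<longrightarrow> S x = {}"
    and lclosed: "locally_closed_at (graph S) (x0, y0)"
    and kp: "\<kappa> > 0" and Kk: "K > \<kappa>"
    and fail: "\<forall>V W. open V \<longrightarrow> x0 \<in> V \<longrightarrow> open W \<longrightarrow> y0 \<in> W \<longrightarrow> \<not> aubin_inclusion S X V W K"
    and rho: "\<rho> > 0"
  shows "\<exists>z p q v. z \<in> graph S \<and> dist z (x0, y0) < \<rho> \<and> p \<in> X \<and> q \<in> X \<and> dist p x0 < \<rho> \<and> dist q x0 < \<rho>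
     \<and> p \<noteq> q \<and> norm v \<le> 1 \<and> (\<kappa> *\<^sub>R sgn (p - q), v) \<in> regular_normal_cone (graph S) z"
proof -
  define G where "G = graph S"
  obtain \<epsilon>0 where e0: "\<epsilon>0 > 0" "closed (G \<inter> cball (x0, y0) \<epsilon>0)"
    using lclosed unfolding locally_closed_at_def G_def by blast
  define C0 where "C0 = G \<inter> cball (x0, y0) \<epsilon>0"
  have cC0: "compact C0"
    unfolding C0_def compact_eq_bounded_closed using e0(2) bounded_cball bounded_subset by blast
  have Kp: "K > 0" using kp Kk by simp
  define \<sigma> where "\<sigma> = min \<rho> (\<epsilon>0/2) / (2*K + 4)"
  have sp: "\<sigma> > 0" using rho e0 Kp by (simp add: \<sigma>_def)
  have s_le: "(2*K + 4) * \<sigma> = min \<rho> (\<epsilon>0/2)" using Kp by (simp add: \<sigma>_def)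
  have "\<not> aubin_inclusion S X (ball x0 \<sigma>) (ball y0 \<sigma>) K" using fail sp by simp
  then obtain b a y where b: "b \<in> X" "dist b x0 < \<sigma>" and a: "a \<in> X" "dist a x0 < \<sigma>"
    and y: "y \<in> S a" "dist y y0 < \<sigma>" and viol: "\<forall>y'\<in>S b. \<not> dist y y' \<le> K * dist a b"
    unfolding aubin_inclusion_def by (auto simp: dist_commute)
  have ab: "a \<noteq> b" using viol y(1) by force
  define D where "D = norm (a - b)"
  have Dp: "D > 0" using ab by (simp add: D_def)
  have D2: "D < 2 * \<sigma>"
  proof -
    have "D = dist a b" by (simp add: D_def dist_norm)
    also have "\<dots> \<le> dist a x0 + dist b x0" by (rule dist_triangle2)
    finally show ?thesis using a b by simp
  qed
  define \<delta> where "\<delta> = (K - \<kappa>) * D"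
  have dp: "\<delta> > 0" using Kk Dp by (simp add: \<delta>_def)
  define J where "J z = \<kappa> * norm (fst z - b) + sqrt ((norm (snd z - y))^2 + \<delta>^2)" for z :: "'n \<times> 'm"
  have cJ: "continuous_on C0 J" unfolding J_def by (intro continuous_intros)
  have ayC0: "(a, y) \<in> C0"
  proof -
    have "dist (x0, y0) (a, y) \<le> dist x0 a + dist y0 y" by (rule dist_pair_le)
    also have "\<dots> < 2 * \<sigma>" using a y by (simp add: dist_commute)
    also have "\<dots> \<le> \<epsilon>0"
    proof -
      have "(2*K+4) * \<sigma> \<le> \<epsilon>0/2" using s_le by simp
      moreover have "2 * \<sigma> \<le> (2*K+4) * \<sigma>" using sp Kp by (intro mult_right_mono) auto
      ultimately show ?thesis using e0 by linarith
    qed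
    finally show ?thesis using y(1) by (simp add: C0_def G_def graph_def)
  qed
  obtain zs where zs: "zs \<in> C0" "\<forall>z\<in>C0. J zs \<le> J z"
    using continuous_attains_inf[OF cC0 _ cJ] ayC0 by blast
  obtain q \<eta>s where zsq: "zs = (q, \<eta>s)" by (cases zs)
  have Jay: "J (a, y) = \<kappa> * D + \<delta>" using dp by (simp add: J_def D_def)
  define R where "R = sqrt ((norm (\<eta>s - y))^2 + \<delta>^2)"
  have Rd: "R \<ge> \<delta>" unfolding R_def by (rule real_le_rsqrt) simp
  have Rs: "R \<ge> norm (\<eta>s - y)" unfolding R_def by (rule real_le_rsqrt) simp
  have Jzs: "J zs = \<kappa> * norm (q - b) + R" by (simp add: J_def R_def zsq)
  have Jle: "\<kappa> * norm (q - b) + R \<le> \<kappa> * D + \<delta>" using zs ayC0 Jay Jzs by metis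
  have qb: "norm (q - b) \<le> D"
  proof -
    have "\<kappa> * norm (q - b) \<le> \<kappa> * D" using Jle Rd by linarith
    then show ?thesis using kp by simp
  qed
  have etay: "norm (\<eta>s - y) \<le> K * D"
    using Jle Rs kp \<delta>_def by (smt (verit) mult_nonneg_nonneg norm_ge_zero left_diff_distrib)
  have zsG: "\<eta>s \<in> S q" using zs(1) by (simp add: C0_def G_def graph_def zsq)
  have qX: "q \<in> X" using dom zsG by blast
  have qneb: "q \<noteq> b"
  proof
    assume "q = b"
    then have "\<not> dist y \<eta>s \<le> K * dist a b" using viol zsG by blast
    then have "norm (\<eta>s - y) > K * D" by (simp add: dist_norm D_def norm_minus_commute)
    moreover have "R \<le> \<kappa> * D + \<delta>" using Jle \<open>q = b\<close> by simp
    ultimately show False using Rs by (simp add: \<delta>_def algebra_simps)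
  qed
  have dq: "dist q x0 < 3 * \<sigma>"
  proof -
    have "dist q x0 \<le> dist q b + dist b x0" by (rule dist_triangle)
    also have "\<dots> \<le> D + dist b x0" using qb by (simp add: dist_norm)
    finally show ?thesis using D2 b by linarith
  qed
  have deta: "dist \<eta>s y0 < (2*K + 1) * \<sigma>"
  proof -
    have "dist \<eta>s y0 \<le> dist \<eta>s y + dist y y0" by (rule dist_triangle)
    also have "\<dots> \<le> K * D + dist y y0" using etay by (simp add: dist_norm)
    also have "K * D \<le> K * (2 * \<sigma>)" using D2 Kp by (intro mult_left_mono) auto
    finally show ?thesis using y(2) by (simp add: algebra_simps)
  qed
  have dzs: "dist zs (x0, y0) < min \<rho> (\<epsilon>0/2)"
  proof -
    have "dist zs (x0, y0) \<le> dist q x0 + dist \<eta>s y0" unfolding zsq by (rule dist_pair_le)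
    also have "\<dots> < 3 * \<sigma> + (2*K + 1) * \<sigma>" using dq deta by simp
    also have "\<dots> = (2*K + 4) * \<sigma>" by (simp add: algebra_simps)
    finally show ?thesis using s_le by simp
  qed
  define Lq where "Lq = norm (q - b)"
  have Lqp: "Lq > 0" using qneb by (simp add: Lq_def)
  have Rp: "R > 0" using Rd dp by simp
  define v where "v = - ((1/R) *\<^sub>R (\<eta>s - y))"
  have nv: "norm v \<le> 1" using Rs Rp by (simp add: v_def divide_le_eq_1)
  define w where "w = (\<kappa> *\<^sub>R sgn (b - q), v)"
  define C where "C = \<kappa> / (2 * Lq) + 1 / (2 * \<delta>)"
  have Cp: "C \<ge> 0" using kp Lqp dp by (simp add: C_def)
  have "w \<in> regular_normal_cone G zs"
  proof (rule prox_regular[of "\<epsilon>0/2" C])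
    show "\<epsilon>0/2 > 0" using e0 by simp
    show "C \<ge> 0" by (rule Cp)
    show "\<forall>z\<in>G. norm (z - zs) < \<epsilon>0/2 \<longrightarrow> inner w (z - zs) \<le> C * (norm (z - zs))^2"
    proof (intro ballI impI)
      fix z assume zG: "z \<in> G" and zn: "norm (z - zs) < \<epsilon>0/2"
      obtain \<xi> \<eta> where zz: "z = (\<xi>, \<eta>)" by (cases z)
      have "dist z (x0, y0) \<le> dist z zs + dist zs (x0, y0)" by (rule dist_triangle)
      also have "\<dots> < \<epsilon>0/2 + \<epsilon>0/2" using zn dzs by (simp add: dist_norm)
      finally have "z \<in> C0" using zG by (simp add: C0_def dist_commute)
      then have Jz: "J zs \<le> J z" using zs by blast
      define I1 where "I1 = inner (q - b) (\<xi> - q)"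
      define N1 where "N1 = (norm (\<xi> - q))^2"
      define I2 where "I2 = inner (\<eta>s - y) (\<eta> - \<eta>s)"
      define N2 where "N2 = (norm (\<eta> - \<eta>s))^2"
      have i1: "norm (\<xi> - b) \<le> Lq + I1 / Lq + N1 / (2 * Lq)"
      proof -
        have "norm (\<xi> - b) = sqrt ((norm ((q - b) + (\<xi> - q)))^2)" by simp
        also have "\<dots> \<le> sqrt (Lq^2) + ((norm ((q - b) + (\<xi> - q)))^2 - Lq^2) / (2 * sqrt (Lq^2))"
          using Lqp by (intro sqrt_concave_ub) auto
        also have "(norm ((q - b) + (\<xi> - q)))^2 = Lq^2 + 2 * I1 + N1"
          unfolding norm_add_sq Lq_def I1_def N1_def ..
        also have "sqrt (Lq^2) = Lq" using Lqp by simp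
        finally show ?thesis using Lqp by (simp add: add_divide_distrib)
      qed
      have i2: "sqrt ((norm (\<eta> - y))^2 + \<delta>^2) \<le> R + I2 / R + N2 / (2 * R)"
      proof -
        have hq: "(norm (\<eta> - y))^2 = (norm (\<eta>s - y))^2 + 2 * I2 + N2"
        proof -
          have "(norm (\<eta> - y))^2 = (norm ((\<eta>s - y) + (\<eta> - \<eta>s)))^2" by simp
          also have "\<dots> = (norm (\<eta>s - y))^2 + 2 * I2 + N2" unfolding norm_add_sq I2_def N2_def ..
          finally show ?thesis .
        qed
        have R2: "R^2 = (norm (\<eta>s - y))^2 + \<delta>^2" unfolding R_def by simp
        have "sqrt ((norm (\<eta> - y))^2 + \<delta>^2) \<le> sqrt (R^2) + (((norm (\<eta> - y))^2 + \<delta>^2) - R^2) / (2 * sqrt (R^2))"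
          using Rp by (intro sqrt_concave_ub) auto
        also have "\<dots> = R + (2 * I2 + N2) / (2 * R)" using Rp by (simp add: hq R2 R_def[symmetric])
        finally show ?thesis using Rp by (simp add: add_divide_distrib)
      qed
      have Jz': "J z = \<kappa> * norm (\<xi> - b) + sqrt ((norm (\<eta> - y))^2 + \<delta>^2)" by (simp add: J_def zz)
      have k1: "\<kappa> * norm (\<xi> - b) \<le> \<kappa> * Lq + \<kappa> * (I1 / Lq) + \<kappa> * N1 / (2 * Lq)"
        using mult_left_mono[OF i1, of \<kappa>] kp by (simp add: algebra_simps)
      have inw: "inner w (z - zs) = - (\<kappa> * (I1 / Lq)) - I2 / R"
      proof -
        have "inner (\<kappa> *\<^sub>R sgn (b - q)) (\<xi> - q) = \<kappa> * (inner (b - q) (\<xi> - q) / Lq)"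
          by (simp add: sgn_div_norm Lq_def norm_minus_commute divide_inverse)
        moreover have "inner (b - q) (\<xi> - q) = - I1" unfolding I1_def
          by (metis inner_minus_left minus_diff_eq)
        moreover have "inner v (\<eta> - \<eta>s) = - (I2 / R)" by (simp add: v_def I2_def divide_inverse)
        ultimately show ?thesis by (simp add: w_def zz zsq)
      qed
      have n2: "N2 / (2 * R) \<le> N2 / (2 * \<delta>)" using Rd dp by (intro divide_left_mono) (auto simp: N2_def)
      have c1: "\<kappa> * N1 / (2 * Lq) \<le> C * N1"
      proof -
        have "\<kappa> * N1 / (2 * Lq) = (\<kappa> / (2 * Lq)) * N1" by simp
        also have "\<dots> \<le> C * N1" using dp by (intro mult_right_mono) (auto simp: C_def N1_def)
        finally show ?thesis .
      qed
      have c2: "N2 / (2 * \<delta>) \<le> C * N2"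
      proof -
        have "N2 / (2 * \<delta>) = (1 / (2 * \<delta>)) * N2" by simp
        also have "\<dots> \<le> C * N2" using kp Lqp by (intro mult_right_mono) (auto simp: C_def N2_def)
        finally show ?thesis .
      qed
      have nz: "(norm (z - zs))^2 = N1 + N2" by (simp add: zz zsq norm_Pair N1_def N2_def)
      have st1: "\<kappa> * Lq + R \<le> \<kappa> * Lq + \<kappa> * (I1 / Lq) + \<kappa> * N1 / (2 * Lq) + (R + I2 / R + N2 / (2 * R))"
        using Jz Jz' Jzs k1 i2 unfolding Lq_def by linarith
      have "inner w (z - zs) \<le> C * N1 + C * N2"
        unfolding inw using st1 n2 c1 c2 by linarith
      then show "inner w (z - zs) \<le> C * (norm (z - zs))^2" by (simp add: nz algebra_simps)
    qed
  qed
  then have wN: "(\<kappa> *\<^sub>R sgn (b - q), v) \<in> regular_normal_cone (graph S) zs" by (simp add: w_def G_def)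
  have sr: "(2*K + 4) * \<sigma> \<le> \<rho>" using s_le by simp
  have "3 * \<sigma> \<le> (2*K + 4) * \<sigma>" using sp Kp by (intro mult_right_mono) auto
  then have s3: "3 * \<sigma> \<le> \<rho>" using sr by linarith
  have zsG': "zs \<in> graph S" using zs(1) by (simp add: C0_def G_def)
  have "dist zs (x0, y0) < \<rho>" using dzs by simp
  moreover have "dist b x0 < \<rho>" using b(2) s3 sp by linarith
  moreover have "dist q x0 < \<rho>" using dq s3 by linarith
  ultimately show ?thesis using zsG' b(1) qX qneb nv wN by blast
qed


lemma lim_one_over:
  fixes f :: "nat \<Rightarrow> 'a::metric_space"
  assumes "\<forall>j. dist (f j) a < 1 / Suc j"
  shows "f \<longlonglongrightarrow> a"
proof (rule metric_LIMSEQ_I)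
  fix r :: real assume "r > 0"
  then obtain n where n: "inverse (real (Suc n)) < r" using reals_Archimedean by blast
  show "\<exists>no. \<forall>j\<ge>no. dist (f j) a < r"
  proof (intro exI allI impI)
    fix j assume "j \<ge> n"
    then have "1 / real (Suc j) \<le> inverse (real (Suc n))" by (simp add: inverse_eq_divide frac_le)
    moreover have "dist (f j) a < 1 / real (Suc j)" using assms by blast
    ultimately show "dist (f j) a < r" using n by linarith
  qed
qed

lemma limit_extract:
  fixes G :: "('n::euclidean_space \<times> 'm::euclidean_space) set"
  assumes chordT: "\<forall>p q e. (\<forall>j. p j \<in> X \<and> q j \<in> X \<and> p j \<noteq> q j) \<longrightarrow> p \<longlonglongrightarrow> x0 \<longrightarrow> q \<longlonglongrightarrow> x0
        \<longrightarrow> (\<lambda>j. sgn (p j - q j)) \<longlonglongrightarrow> e \<longrightarrow> e \<in> T"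
    and H: "\<forall>j::nat. \<exists>z p q v. z \<in> G \<and> dist z (x0, y0) < 1 / Suc j \<and> p \<in> X \<and> q \<in> X
        \<and> dist p x0 < 1 / Suc j \<and> dist q x0 < 1 / Suc j \<and> p \<noteq> q \<and> norm v \<le> B + 1 / Suc j
        \<and> (sgn (p - q), v) \<in> regular_normal_cone G z"
  shows "\<exists>e v0. e \<in> T \<and> norm e = 1 \<and> norm v0 \<le> B \<and> (e, v0) \<in> limiting_normal_cone G (x0, y0)"
proof -
  obtain zf pf qf vf where F: "\<forall>j. zf j \<in> G \<and> dist (zf j) (x0, y0) < 1 / Suc j \<and> pf j \<in> X \<and> qf j \<in> X
        \<and> dist (pf j) x0 < 1 / Suc j \<and> dist (qf j) x0 < 1 / Suc j \<and> pf j \<noteq> qf j \<and> norm (vf j) \<le> B + 1 / Suc j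
        \<and> (sgn (pf j - qf j), vf j) \<in> regular_normal_cone G (zf j)"
    using H by metis
  define sf where "sf j = (sgn (pf j - qf j), vf j)" for j
  have "sf j \<in> cball 0 (2 + \<bar>B\<bar>)" for j
  proof -
    have "norm (sf j) \<le> norm (sgn (pf j - qf j)) + norm (vf j)" unfolding sf_def by (rule norm_Pair_le)
    also have "\<dots> \<le> 1 + (B + 1 / Suc j)" using F by (intro add_mono) (auto simp: norm_sgn)
    also have "\<dots> \<le> 2 + \<bar>B\<bar>"
    proof -
      have "1 / real (Suc j) \<le> 1" by (simp add: divide_le_eq_1)
      then show ?thesis by linarith
    qed
    finally show ?thesis by simp
  qed
  then obtain l r where lr: "strict_mono r" "(sf \<circ> r) \<longlonglongrightarrow> l"
    using seq_compactE[OF compact_imp_seq_compact[OF compact_cball]] by metis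
  have zl: "zf \<longlonglongrightarrow> (x0, y0)" using F by (intro lim_one_over) blast
  have pl: "pf \<longlonglongrightarrow> x0" using F by (intro lim_one_over) blast
  have ql: "qf \<longlonglongrightarrow> x0" using F by (intro lim_one_over) blast
  have e_lim: "(\<lambda>j. sgn ((pf \<circ> r) j - (qf \<circ> r) j)) \<longlonglongrightarrow> fst l"
    using tendsto_fst[OF lr(2)] by (simp add: sf_def o_def)
  have v_lim: "(vf \<circ> r) \<longlonglongrightarrow> snd l"
    using tendsto_snd[OF lr(2)] by (simp add: sf_def o_def)
  have eT: "fst l \<in> T"
    using chordT[rule_format, OF _ LIMSEQ_subseq_LIMSEQ[OF pl lr(1)] LIMSEQ_subseq_LIMSEQ[OF ql lr(1)] e_lim] F by simp
  have "(\<lambda>j. norm (sgn ((pf \<circ> r) j - (qf \<circ> r) j))) \<longlonglongrightarrow> norm (fst l)" using e_lim by (rule tendsto_norm)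
  moreover have "(\<lambda>j. norm (sgn ((pf \<circ> r) j - (qf \<circ> r) j))) = (\<lambda>j. 1)" using F by (auto simp: norm_sgn)
  ultimately have ne: "norm (fst l) = 1" using LIMSEQ_unique tendsto_const by metis
  have nv: "norm (snd l) \<le> B"
  proof (rule LIMSEQ_le)
    show "(\<lambda>j. norm ((vf \<circ> r) j)) \<longlonglongrightarrow> norm (snd l)" using v_lim by (rule tendsto_norm)
    have "((\<lambda>j. inverse (real (Suc j))) \<circ> r) \<longlonglongrightarrow> 0" by (rule LIMSEQ_subseq_LIMSEQ[OF LIMSEQ_inverse_real_of_nat lr(1)])
    then have "(\<lambda>j. B + inverse (real (Suc (r j)))) \<longlonglongrightarrow> B + 0" by (intro tendsto_add tendsto_const) (simp add: o_def)
    then show "(\<lambda>j. B + inverse (real (Suc (r j)))) \<longlonglongrightarrow> B" by simp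
    show "\<exists>N. \<forall>n\<ge>N. norm ((vf \<circ> r) n) \<le> B + inverse (real (Suc (r n)))"
      using F by (auto simp: inverse_eq_divide)
  qed
  have "l \<in> limiting_normal_cone G (x0, y0)"
    unfolding limiting_normal_cone_def
  proof (intro CollectI exI conjI allI)
    fix i show "(zf \<circ> r) i \<in> G" using F by simp
    show "(sf \<circ> r) i \<in> regular_normal_cone G ((zf \<circ> r) i)" using F by (simp add: sf_def)
  next
    show "(zf \<circ> r) \<longlonglongrightarrow> (x0, y0)" using LIMSEQ_subseq_LIMSEQ[OF zl lr(1)] .
    show "(sf \<circ> r) \<longlonglongrightarrow> l" by (rule lr(2))
  qed
  then have "(fst l, snd l) \<in> limiting_normal_cone G (x0, y0)" by simp
  then show ?thesis using eT ne nv by blast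
qed



lemma necessity:
  fixes S :: "'n::euclidean_space \<Rightarrow> 'm::euclidean_space set"
  assumes dom: "\<forall>x. x \<notin> X \<longrightarrow> S x = {}"
    and tangu: "\<forall>\<epsilon>>0. \<exists>\<rho>>0. \<forall>x'\<in>X. dist x' x0 < \<rho> \<longrightarrow>
          (\<forall>r>0. \<exists>\<xi>\<in>X. \<xi> \<noteq> x' \<and> dist \<xi> x' < r \<and> norm (sgn (\<xi> - x') - sgn u) \<le> \<epsilon>)"
    and aub: "aubin_inclusion S X V W K" and V: "open V" "x0 \<in> V" and W: "open W" "y0 \<in> W"
    and K: "K \<ge> 0"
    and uv: "(u, v) \<in> limiting_normal_cone (graph S) (x0, y0)" and u0: "u \<noteq> 0"
  shows "norm u \<le> K * norm v"
proof -
  obtain zs vs where zv: "\<forall>i. zs i \<in> graph S \<and> vs i \<in> regular_normal_cone (graph S) (zs i)"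
    "zs \<longlonglongrightarrow> (x0, y0)" "vs \<longlonglongrightarrow> (u, v)"
    using uv unfolding limiting_normal_cone_def by blast
  define w where "w = sgn u"
  have nw: "norm w = 1" using u0 by (simp add: w_def norm_sgn)
  have uw: "inner u w = norm u" using u0
    by (simp add: w_def sgn_div_norm divide_inverse power2_norm_eq_inner[symmetric] power2_eq_square)
  obtain \<rho>V where rV: "\<rho>V > 0" "ball x0 \<rho>V \<subseteq> V" using V open_contains_ball by blast
  have key: "norm u \<le> K * norm v + \<epsilon> * (2 * K + 2 + norm u)" if ep: "\<epsilon> > 0" for \<epsilon>
  proof -
    obtain \<rho> where r: "\<rho> > 0" "\<forall>x'\<in>X. dist x' x0 < \<rho> \<longrightarrow>
          (\<forall>r>0. \<exists>\<xi>\<in>X. \<xi> \<noteq> x' \<and> dist \<xi> x' < r \<and> norm (sgn (\<xi> - x') - w) \<le> \<epsilon>)"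
      using tangu ep unfolding w_def by blast
    have ev1: "eventually (\<lambda>i. dist (fst (zs i)) x0 < min \<rho> (\<rho>V/2)) sequentially"
    proof -
      have "min \<rho> (\<rho>V/2) > 0" using r(1) rV(1) by simp
      then show ?thesis using tendsto_fst[OF zv(2)] unfolding tendsto_iff by fastforce
    qed
    have ev2: "eventually (\<lambda>i. snd (zs i) \<in> W) sequentially"
      using tendsto_snd[OF zv(2)] W unfolding tendsto_def by simp
    have ev3: "eventually (\<lambda>i. dist (fst (vs i)) u < \<epsilon>) sequentially"
      using tendsto_fst[OF zv(3)] ep unfolding tendsto_iff by simp
    have ev4: "eventually (\<lambda>i. dist (snd (vs i)) v < \<epsilon>) sequentially"
      using tendsto_snd[OF zv(3)] ep unfolding tendsto_iff by simp
    obtain i where i: "dist (fst (zs i)) x0 < min \<rho> (\<rho>V/2)" "snd (zs i) \<in> W"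
      "dist (fst (vs i)) u < \<epsilon>" "dist (snd (vs i)) v < \<epsilon>"
      using eventually_happens[OF eventually_conj[OF ev1 eventually_conj[OF ev2 eventually_conj[OF ev3 ev4]]]]
      by auto
    obtain xi yi where zi: "zs i = (xi, yi)" by (cases "zs i")
    obtain ui vi where vi: "vs i = (ui, vi)" by (cases "vs i")
    have "zs i \<in> graph S" using zv(1) by blast
    then have yiS: "yi \<in> S xi" using zi by (simp add: graph_def)
    have xiX: "xi \<in> X" using dom yiS by blast
    have xiV: "xi \<in> V" using i(1) rV by (auto simp: zi dist_commute)
    obtain \<delta> where d: "\<delta> > 0" "\<forall>z\<in>graph S. norm (z - zs i) < \<delta> \<longrightarrow> inner (vs i) (z - zs i) \<le> \<epsilon> * norm (z - zs i)"
      using zv(1) ep unfolding regular_normal_cone_def by blast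
    define r0 where "r0 = min (\<delta> / (1 + K)) (\<rho>V/2)"
    have r0p: "r0 > 0" using d K rV by (simp add: r0_def)
    obtain \<xi> where xi: "\<xi> \<in> X" "\<xi> \<noteq> xi" "dist \<xi> xi < r0" "norm (sgn (\<xi> - xi) - w) \<le> \<epsilon>"
      using r(2) xiX i(1) r0p by (auto simp: zi)
    have xiV': "\<xi> \<in> V"
    proof -
      have "dist \<xi> x0 \<le> dist \<xi> xi + dist xi x0" by (rule dist_triangle)
      also have "\<dots> < \<rho>V/2 + \<rho>V/2" using xi(3) i(1) by (intro add_strict_mono) (auto simp: r0_def zi)
      finally show ?thesis using rV by (auto simp: dist_commute)
    qed
    obtain \<eta> where eta: "\<eta> \<in> S \<xi>" "dist yi \<eta> \<le> K * dist xi \<xi>"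
    proof -
      have "\<forall>x\<in>X \<inter> V. \<forall>x'\<in>X \<inter> V. \<forall>y\<in>S x' \<inter> W. \<exists>y'\<in>S x. dist y y' \<le> K * dist x' x"
        using aub unfolding aubin_inclusion_def .
      moreover have "\<xi> \<in> X \<inter> V" "xi \<in> X \<inter> V" "yi \<in> S xi \<inter> W" using xiX xiV xi(1) xiV' yiS i(2) by (auto simp: zi)
      ultimately show ?thesis using that by blast
    qed
    define Dn where "Dn = norm (\<xi> - xi)"
    have Dp: "Dn > 0" using xi(2) by (simp add: Dn_def)
    have ne: "norm (\<eta> - yi) \<le> K * Dn" using eta(2) by (simp add: dist_norm Dn_def norm_minus_commute)
    have nz: "norm ((\<xi>, \<eta>) - zs i) \<le> (1 + K) * Dn"
    proof -
      have "norm ((\<xi>, \<eta>) - zs i) = norm (\<xi> - xi, \<eta> - yi)" by (simp add: zi)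
      also have "\<dots> \<le> Dn + norm (\<eta> - yi)" unfolding Dn_def by (rule norm_Pair_le)
      finally show ?thesis using ne by (simp add: algebra_simps)
    qed
    have "(1 + K) * Dn < \<delta>"
    proof -
      have "Dn < \<delta> / (1 + K)" using xi(3) by (simp add: Dn_def dist_norm r0_def)
      then show ?thesis using K by (simp add: field_simps)
    qed
    then have "inner (vs i) ((\<xi>, \<eta>) - zs i) \<le> \<epsilon> * norm ((\<xi>, \<eta>) - zs i)"
      using d(2) nz eta(1) by (auto simp: graph_def)
    also have "\<dots> \<le> \<epsilon> * ((1 + K) * Dn)" using nz ep by (intro mult_left_mono) auto
    finally have in1: "inner ui (\<xi> - xi) + inner vi (\<eta> - yi) \<le> \<epsilon> * ((1 + K) * Dn)" by (simp add: zi vi)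
    have "- inner vi (\<eta> - yi) \<le> norm vi * norm (\<eta> - yi)"
      using Cauchy_Schwarz_ineq2[of vi "\<eta> - yi"] by (simp add: abs_le_iff)
    also have "\<dots> \<le> norm vi * (K * Dn)" using ne by (intro mult_left_mono) auto
    finally have in2: "inner ui (\<xi> - xi) \<le> (norm vi * K + \<epsilon> * (1 + K)) * Dn" using in1 by (simp add: algebra_simps)
    have in3: "inner ui (sgn (\<xi> - xi)) \<le> norm vi * K + \<epsilon> * (1 + K)"
    proof -
      have "inner ui (sgn (\<xi> - xi)) = inner ui (\<xi> - xi) / Dn" by (simp add: sgn_div_norm Dn_def divide_inverse)
      also have "\<dots> \<le> norm vi * K + \<epsilon> * (1 + K)" using in2 Dp by (simp add: pos_divide_le_eq)
      finally show ?thesis .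
    qed
    have nvi: "norm vi \<le> norm v + \<epsilon>" using i(4) norm_triangle_ineq2[of vi v] by (simp add: vi dist_norm)
    have t1: "inner (u - ui) (sgn (\<xi> - xi)) \<le> \<epsilon>"
    proof -
      have "inner (u - ui) (sgn (\<xi> - xi)) \<le> norm (u - ui) * norm (sgn (\<xi> - xi))" by (rule norm_cauchy_schwarz)
      also have "\<dots> = norm (u - ui)" using xi(2) by (simp add: norm_sgn)
      also have "\<dots> < \<epsilon>" using i(3) by (simp add: vi dist_norm norm_minus_commute)
      finally show ?thesis by simp
    qed
    have t2: "inner u (w - sgn (\<xi> - xi)) \<le> norm u * \<epsilon>"
    proof -
      have "inner u (w - sgn (\<xi> - xi)) \<le> norm u * norm (w - sgn (\<xi> - xi))" by (rule norm_cauchy_schwarz)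
      also have "\<dots> \<le> norm u * \<epsilon>" using xi(4) by (intro mult_left_mono) (auto simp: norm_minus_commute)
      finally show ?thesis .
    qed
    have "norm u = inner ui (sgn (\<xi> - xi)) + inner (u - ui) (sgn (\<xi> - xi)) + inner u (w - sgn (\<xi> - xi))"
      using uw by (simp add: inner_diff_left inner_diff_right)
    also have "\<dots> \<le> (norm v + \<epsilon>) * K + \<epsilon> * (1 + K) + \<epsilon> + norm u * \<epsilon>"
    proof -
      have "norm vi * K \<le> (norm v + \<epsilon>) * K" using nvi K by (intro mult_right_mono) auto
      then show ?thesis using in3 t1 t2 by linarith
    qed
    also have "\<dots> = K * norm v + \<epsilon> * (2 * K + 2 + norm u)" by (simp add: algebra_simps)
    finally show ?thesis .
  qed
  show ?thesis
  proof (rule field_le_epsilon)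
    fix e :: real assume e: "e > 0"
    define c where "c = 2 * K + 2 + norm u"
    have cp: "c > 0" using K by (simp add: c_def add_pos_nonneg)
    have "norm u \<le> K * norm v + (e / c) * c" using key[of "e / c"] e cp by (simp add: c_def)
    then show "norm u \<le> K * norm v + e" using cp by simp
  qed
qed



theorem mainTheorem4:
  fixes X :: "'n::euclidean_space set" and d :: nat
    and S :: "'n \<Rightarrow> 'm::euclidean_space set"
    and x0 :: 'n and y0 :: 'm
    and H :: "'m \<Rightarrow> 'n set"
  assumes manifold: "C1_submanifold X d"
    and dom: "\<forall>x. x \<notin> X \<longrightarrow> S x = {}"
    and ingraph: "(x0, y0) \<in> graph S"
    and lclosed: "locally_closed_at (graph S) (x0, y0)"
    and H_def: "\<forall>ystar. H ystar = coderivative S x0 y0 ystar \<inter> tangent_space X x0"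
    and H0: "H 0 = {0}"
  shows "aubin_rel S X x0 y0 \<and>
         graphical_modulus S X x0 y0 = outer_norm H \<and>
         outer_norm H = Sup {ratio_val (norm u) (norm v) | u v.
            (u, v) \<in> limiting_normal_cone (graph S) (x0, y0) \<and> u \<in> tangent_space X x0}"
proof -
  have y0S: "y0 \<in> S x0" using ingraph by (simp add: graph_def)
  have x0X: "x0 \<in> X" using dom y0S by blast
  obtain A :: "'n \<Rightarrow> 'n" where A: "linear A" "tangent_space X x0 = {v. A v = 0}"
    and chord: "\<forall>\<eta>>0. \<exists>\<rho>>0. \<forall>p\<in>X. \<forall>q\<in>X. dist p x0 < \<rho> \<longrightarrow> dist q x0 < \<rho> \<longrightarrow> norm (A (p - q)) \<le> \<eta> * norm (p - q)"
    and mt2: "\<forall>w. A w = 0 \<longrightarrow> norm w = 1 \<longrightarrow> (\<forall>\<epsilon>>0. \<exists>\<rho>>0. \<forall>x'\<in>X. dist x' x0 < \<rho> \<longrightarrow>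
          (\<forall>r>0. \<exists>\<xi>\<in>X. \<xi> \<noteq> x' \<and> dist \<xi> x' < r \<and> norm (sgn (\<xi> - x') - w) \<le> \<epsilon>))"
    using manifold_facts[OF manifold x0X] by blast
  define T where "T = tangent_space X x0"
  define G where "G = graph S"
  define N where "N = limiting_normal_cone G (x0, y0)"
  have Hmem: "z \<in> H w \<longleftrightarrow> (z, - w) \<in> N \<and> z \<in> T" for z w
    using H_def by (simp add: coderivative_def N_def T_def G_def)
  have blA: "bounded_linear A" using A(1) by (simp add: linear_conv_bounded_linear)
  have chordT: "e \<in> T" if pq: "\<forall>j. p j \<in> X \<and> q j \<in> X \<and> p j \<noteq> q j" and pl: "p \<longlonglongrightarrow> x0" and ql: "q \<longlonglongrightarrow> x0"
    and el: "(\<lambda>j. sgn (p j - q j)) \<longlonglongrightarrow> e" for p q e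
  proof -
    have Al: "(\<lambda>j. norm (A (sgn (p j - q j)))) \<longlonglongrightarrow> norm (A e)"
      by (intro tendsto_norm bounded_linear.tendsto[OF blA] el)
    have "norm (A e) \<le> 0 + \<eta>" if eta: "\<eta> > 0" for \<eta>
    proof -
      obtain \<rho> where r: "\<rho> > 0" "\<forall>p\<in>X. \<forall>q\<in>X. dist p x0 < \<rho> \<longrightarrow> dist q x0 < \<rho> \<longrightarrow> norm (A (p - q)) \<le> \<eta> * norm (p - q)"
        using chord eta by blast
      have "eventually (\<lambda>j. dist (p j) x0 < \<rho>) sequentially" using pl r(1) unfolding tendsto_iff by blast
      moreover have "eventually (\<lambda>j. dist (q j) x0 < \<rho>) sequentially" using ql r(1) unfolding tendsto_iff by blast
      ultimately have ev: "eventually (\<lambda>j. norm (A (sgn (p j - q j))) \<le> \<eta>) sequentially"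
      proof eventually_elim
        case (elim j)
        have le: "norm (A (p j - q j)) \<le> \<eta> * norm (p j - q j)" using r(2) pq elim by blast
        have "A (sgn (p j - q j)) = (1 / norm (p j - q j)) *\<^sub>R A (p j - q j)"
          using A(1) by (simp add: sgn_div_norm linear_scale divide_inverse)
        then have "norm (A (sgn (p j - q j))) = norm (A (p j - q j)) / norm (p j - q j)" by simp
        also have "\<dots> \<le> \<eta>" using le pq by (simp add: pos_divide_le_eq)
        finally show ?case .
      qed
      have "norm (A e) \<le> \<eta>"
        using LIMSEQ_le[OF Al tendsto_const[of \<eta>]] ev unfolding eventually_sequentially by blast
      then show ?thesis by simp
    qed
    then have "norm (A e) \<le> 0" by (rule field_le_epsilon)
    then show ?thesis using A(2) by (simp add: T_def)
  qed
  have chordAll: "\<forall>p q e. (\<forall>j. p j \<in> X \<and> q j \<in> X \<and> p j \<noteq> q j) \<longrightarrow> p \<longlonglongrightarrow> x0 \<longrightarrow> q \<longlonglongrightarrow> x0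
        \<longrightarrow> (\<lambda>j. sgn (p j - q j)) \<longlonglongrightarrow> e \<longrightarrow> e \<in> T" using chordT by blast
  have tangT: "\<forall>\<epsilon>>0. \<exists>\<rho>>0. \<forall>x'\<in>X. dist x' x0 < \<rho> \<longrightarrow>
          (\<forall>r>0. \<exists>\<xi>\<in>X. \<xi> \<noteq> x' \<and> dist \<xi> x' < r \<and> norm (sgn (\<xi> - x') - sgn u) \<le> \<epsilon>)"
    if "u \<in> T" "u \<noteq> 0" for u
  proof -
    have "A u = 0" using that A(2) by (simp add: T_def)
    then have "A (sgn u) = 0" using A(1) by (simp add: sgn_div_norm linear_scale)
    moreover have "norm (sgn u) = 1" using that by (simp add: norm_sgn)
    ultimately show ?thesis using mt2 by blast
  qed
  define c where "c = outer_norm H"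
  have c_ub: "ratio_val (norm z) (norm w) \<le> c" if "z \<in> H w" for z w
    unfolding c_def outer_norm_def using that by (intro Sup_upper) (auto simp: graph_def)
  have c0: "0 \<le> c" using c_ub[of 0 0] H0 by (simp add: ratio_val_def)
  have core': "\<exists>z p q v. z \<in> G \<and> dist z (x0, y0) < 1 / Suc j \<and> p \<in> X \<and> q \<in> X
        \<and> dist p x0 < 1 / Suc j \<and> dist q x0 < 1 / Suc j \<and> p \<noteq> q \<and> norm v \<le> 1/\<kappa> + 1 / Suc j
        \<and> (sgn (p - q), v) \<in> regular_normal_cone G z"
    if kp: "\<kappa> > 0" and Kk: "K > \<kappa>"
      and fail: "\<forall>V W. open V \<longrightarrow> x0 \<in> V \<longrightarrow> open W \<longrightarrow> y0 \<in> W \<longrightarrow> \<not> aubin_inclusion S X V W K" for \<kappa> K j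
  proof -
    obtain z p q v where zpqv: "z \<in> graph S" "dist z (x0, y0) < 1 / Suc j" "p \<in> X" "q \<in> X"
      "dist p x0 < 1 / Suc j" "dist q x0 < 1 / Suc j" "p \<noteq> q" "norm v \<le> 1"
      "(\<kappa> *\<^sub>R sgn (p - q), v) \<in> regular_normal_cone (graph S) z"
      using core[OF dom lclosed kp Kk fail, of "1 / Suc j"] by auto
    have "(1/\<kappa>) *\<^sub>R (\<kappa> *\<^sub>R sgn (p - q), v) \<in> regular_normal_cone (graph S) z"
      using zpqv(9) kp by (intro regular_scale) auto
    then have rn: "(sgn (p - q), (1/\<kappa>) *\<^sub>R v) \<in> regular_normal_cone G z" using kp by (simp add: G_def)
    have "norm ((1/\<kappa>) *\<^sub>R v) \<le> 1/\<kappa>" using zpqv(8) kp by (simp add: divide_le_cancel)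
    then have "norm ((1/\<kappa>) *\<^sub>R v) \<le> 1/\<kappa> + 1 / Suc j" by (smt (verit) of_nat_0_le_iff divide_nonneg_nonneg)
    then show ?thesis unfolding G_def using zpqv rn[unfolded G_def] by blast
  qed
  have aub: "\<exists>V W \<kappa>. open V \<and> x0 \<in> V \<and> open W \<and> y0 \<in> W \<and> \<kappa> \<ge> 0 \<and> aubin_inclusion S X V W \<kappa>"
  proof (rule ccontr)
    assume na: "\<not> ?thesis"
    have "\<forall>j::nat. \<exists>z p q v. z \<in> G \<and> dist z (x0, y0) < 1 / Suc j \<and> p \<in> X \<and> q \<in> X
        \<and> dist p x0 < 1 / Suc j \<and> dist q x0 < 1 / Suc j \<and> p \<noteq> q \<and> norm v \<le> 0 + 1 / Suc j
        \<and> (sgn (p - q), v) \<in> regular_normal_cone G z"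
    proof
      fix j :: nat
      have fail: "\<forall>V W. open V \<longrightarrow> x0 \<in> V \<longrightarrow> open W \<longrightarrow> y0 \<in> W \<longrightarrow> \<not> aubin_inclusion S X V W (4 * real (Suc j))"
        using na by (metis of_nat_0_le_iff mult_nonneg_nonneg zero_le_numeral)
      have "2 * real (Suc j) > 0" "4 * real (Suc j) > 2 * real (Suc j)" by auto
      from core'[OF this fail, of "2 * j + 1"] obtain z p q v where zz: "z \<in> G" "dist z (x0, y0) < 1 / Suc (2*j+1)"
        "p \<in> X" "q \<in> X" "dist p x0 < 1 / Suc (2*j+1)" "dist q x0 < 1 / Suc (2*j+1)" "p \<noteq> q"
        "norm v \<le> 1 / (2 * real (Suc j)) + 1 / Suc (2*j+1)" "(sgn (p - q), v) \<in> regular_normal_cone G z"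
        by blast
      have e1: "1 / real (Suc (2*j+1)) \<le> 1 / Suc j" by (intro divide_left_mono) auto
      have e2: "1 / (2 * real (Suc j)) + 1 / real (Suc (2*j+1)) = 0 + 1 / Suc j"
        by (simp add: field_simps)
      show "\<exists>z p q v. z \<in> G \<and> dist z (x0, y0) < 1 / Suc j \<and> p \<in> X \<and> q \<in> X
        \<and> dist p x0 < 1 / Suc j \<and> dist q x0 < 1 / Suc j \<and> p \<noteq> q \<and> norm v \<le> 0 + 1 / Suc j
        \<and> (sgn (p - q), v) \<in> regular_normal_cone G z"
      proof (intro exI conjI)
        show "dist z (x0, y0) < 1 / Suc j" "dist p x0 < 1 / Suc j" "dist q x0 < 1 / Suc j"
          using zz e1 by linarith+
        show "norm v \<le> 0 + 1 / Suc j" using zz(8) e2 by linarith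
      qed (use zz in auto)
    qed
    from limit_extract[OF chordAll this] obtain e v0 where ev: "e \<in> T" "norm e = 1" "norm v0 \<le> 0" "(e, v0) \<in> N"
      unfolding N_def by blast
    then have "e \<in> H 0" using Hmem by simp
    then show False using H0 ev(2) by simp
  qed
  have Kin: "\<exists>V W. open V \<and> x0 \<in> V \<and> open W \<and> y0 \<in> W \<and> aubin_inclusion S X V W K"
    if cK: "c < ereal K" for K
  proof (rule ccontr)
    assume nf: "\<not> ?thesis"
    then have fail: "\<forall>V W. open V \<longrightarrow> x0 \<in> V \<longrightarrow> open W \<longrightarrow> y0 \<in> W \<longrightarrow> \<not> aubin_inclusion S X V W K" by blast
    obtain c' where c': "c = ereal c'" using cK c0 by (cases c) auto
    have c'0: "c' \<ge> 0" using c0 c' by simp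
    have c'K: "c' < K" using cK c' by simp
    define \<kappa> where "\<kappa> = (c' + K) / 2"
    have kp: "\<kappa> > 0" "K > \<kappa>" "\<kappa> > c'" using c'0 c'K by (auto simp: \<kappa>_def)
    have "\<forall>j::nat. \<exists>z p q v. z \<in> G \<and> dist z (x0, y0) < 1 / Suc j \<and> p \<in> X \<and> q \<in> X
        \<and> dist p x0 < 1 / Suc j \<and> dist q x0 < 1 / Suc j \<and> p \<noteq> q \<and> norm v \<le> 1/\<kappa> + 1 / Suc j
        \<and> (sgn (p - q), v) \<in> regular_normal_cone G z"
      using core'[OF kp(1,2) fail] by blast
    from limit_extract[OF chordAll this] obtain e v0 where ev: "e \<in> T" "norm e = 1" "norm v0 \<le> 1/\<kappa>" "(e, v0) \<in> N"
      unfolding N_def by blast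
    then have "e \<in> H (- v0)" using Hmem by simp
    then have rl: "ratio_val 1 (norm v0) \<le> ereal c'" using c_ub ev(2) c' by fastforce
    show False
    proof (cases "v0 = 0")
      case True
      then show False using rl by (simp add: ratio_val_def)
    next
      case False
      then have "ereal (1 / norm v0) \<le> ereal c'" using rl by (simp add: ratio_val_def)
      then have "1 / norm v0 \<le> c'" by simp
      moreover have "\<kappa> \<le> 1 / norm v0"
        using ev(3) kp(1) False by (simp add: field_simps)
      ultimately show False using kp(3) by simp
    qed
  qed
  define Q where "Q = {ereal \<kappa> | \<kappa>. \<kappa> \<ge> 0 \<and>
     (\<exists>V W. open V \<and> x0 \<in> V \<and> open W \<and> y0 \<in> W \<and> aubin_inclusion S X V W \<kappa>)}"
  have gm: "graphical_modulus S X x0 y0 = Inf Q" by (simp add: graphical_modulus_def Q_def)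
  have le1: "Inf Q \<le> c"
  proof (cases c)
    case (real c')
    show ?thesis
    proof (rule ereal_le_epsilon2)
      fix e :: real assume e: "e > 0"
      have "c' \<ge> 0" using c0 real by simp
      then have "ereal (c' + e) \<in> Q" using Kin[of "c' + e"] e real by (auto simp: Q_def)
      then have "Inf Q \<le> ereal (c' + e)" by (rule Inf_lower)
      then show "Inf Q \<le> c + ereal e" using real by simp
    qed
  qed (use c0 in auto)
  have le2: "c \<le> Inf Q"
  proof (rule Inf_greatest)
    fix x assume "x \<in> Q"
    then obtain \<kappa> V W where k: "x = ereal \<kappa>" "\<kappa> \<ge> 0" "open V" "x0 \<in> V" "open W" "y0 \<in> W"
      "aubin_inclusion S X V W \<kappa>" by (auto simp: Q_def)
    have "ratio_val (norm z) (norm w) \<le> ereal \<kappa>" if zw: "(w, z) \<in> graph H" for w z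
    proof (cases "z = 0")
      case True
      then show ?thesis using k(2) by (simp add: ratio_val_def)
    next
      case False
      have zH: "(z, - w) \<in> N" "z \<in> T" using zw Hmem by (auto simp: graph_def)
      have "norm z \<le> \<kappa> * norm (- w)"
        using necessity[OF dom tangT[OF zH(2) False] k(7) k(3,4) k(5,6) k(2) zH(1)[unfolded N_def G_def] False] .
      then have nz: "norm z \<le> \<kappa> * norm w" by simp
      then have "w \<noteq> 0" using False by auto
      then show ?thesis using nz by (simp add: ratio_val_def pos_divide_le_eq)
    qed
    then show "c \<le> x" unfolding c_def outer_norm_def k(1) by (intro Sup_least) auto
  qed
  have third: "outer_norm H = Sup {ratio_val (norm u) (norm v) | u v.
            (u, v) \<in> limiting_normal_cone (graph S) (x0, y0) \<and> u \<in> tangent_space X x0}"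
  proof -
    have "{ratio_val (norm z) (norm w) | w z. (w, z) \<in> graph H} = {ratio_val (norm u) (norm v) | u v.
            (u, v) \<in> limiting_normal_cone (graph S) (x0, y0) \<and> u \<in> tangent_space X x0}"
    proof (intro equalityI subsetI)
      fix x assume "x \<in> {ratio_val (norm z) (norm w) | w z. (w, z) \<in> graph H}"
      then obtain w z where "x = ratio_val (norm z) (norm w)" "(z, - w) \<in> N" "z \<in> T"
        using Hmem by (auto simp: graph_def)
      then show "x \<in> {ratio_val (norm u) (norm v) | u v.
            (u, v) \<in> limiting_normal_cone (graph S) (x0, y0) \<and> u \<in> tangent_space X x0}"
        by (auto simp: N_def G_def T_def intro!: exI[of _ z] exI[of _ "- w"])
    next
      fix x assume "x \<in> {ratio_val (norm u) (norm v) | u v.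
            (u, v) \<in> limiting_normal_cone (graph S) (x0, y0) \<and> u \<in> tangent_space X x0}"
      then obtain u v where uv: "x = ratio_val (norm u) (norm v)" "(u, v) \<in> N" "u \<in> T"
        by (auto simp: N_def G_def T_def)
      then have "u \<in> H (- v)" using Hmem by simp
      then show "x \<in> {ratio_val (norm z) (norm w) | w z. (w, z) \<in> graph H}"
        using uv(1) by (auto simp: graph_def intro!: exI[of _ "- v"] exI[of _ u])
    qed
    then show ?thesis unfolding outer_norm_def by simp
  qed
  have "aubin_rel S X x0 y0" unfolding aubin_rel_def using x0X y0S lclosed aub by blast
  then show ?thesis using gm le1 le2 third by (simp add: c_def)
qed


end
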